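(* Let $r\ge3$, $n>r$, $\lambda\in\Lambda(n,r)$ (regarded as an $n$-periodic sequence) and $1\le i\le n$. In $T$: (i) $E_i1_\lambda=1_{\lambda+\alpha_i}E_i$ if $\lambda_{i+1}>0$, and $E_i1_\lambda=0$ otherwise; (ii) $F_i1_\lambda=1_{\lambda-\alpha_i}F_i$ if $\lambda_i>0$, and $F_i1_\lambda=0$ otherwise.
   Context: $T$ is the $\mathbb{Q}(v)$-algebra with generators $E_i,F_i,K_i^{\pm1}$ ($1\le i\le n$, indices mod $n$) and relations: $K_iK_j=K_jK_i$; $K_iK_i^{-1}=K_i^{-1}K_i=1$; $K_iE_j=v^{\epsilon^+(i,j)}E_jK_i$; $K_iF_j=v^{-\epsilon^+(i,j)}F_jK_i$ ($\epsilon^+(i,j)=1$ if $j=i$, $-1$ if $j\equiv i-1\pmod n$, $0$ otherwise); $E_iF_j-F_jE_i=\delta_{ij}\frac{K_iK_{i+1}^{-1}-K_i^{-1}K_{i+1}}{v-v^{-1}}$; $E_iE_j=E_jE_i$, $F_iF_j=F_jF_i$ if $i-j\not\equiv\pm1$; $E_i^2E_j-(v+v^{-1})E_iE_jE_i+E_jE_i^2=0$, $F_i^2F_j-(v+v^{-1})F_iF_jF_i+F_jF_i^2=0$ if $i-j\equiv\pm1\pmod n$; $K_1\cdots K_n=v^r$; $\prod_{j=0}^r(K_i-v^j)=0$. $\Lambda(n,r)$: compositions of $r$ into $n$ nonnegative parts, extended $n$-periodically ($\lambda_{n+1}=\lambda_1$). $1_\lambda=\prod_{i=1}^n\prod_{s=1}^{\lambda_i}\frac{K_iv^{-s+1}-K_i^{-1}v^{s-1}}{v^s-v^{-s}}$.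 $\alpha_i\in\mathbb{Z}^n$ has $j$-th entry $1$ if $j\equiv i$, $-1$ if $j\equiv i+1\pmod n$, $0$ otherwise. *)

theory Defs
  imports "HOL-Computational_Algebra.Polynomial" "HOL-Computational_Algebra.Fraction_Field"
begin

type_synonym qv = "rat poly fract"

definition vq :: qv where "vq = Fract [:0, 1:] 1"

definition qv_algebra :: "(qv \<Rightarrow> 'a::ring_1) \<Rightarrow> bool" where
  "qv_algebra \<phi> \<longleftrightarrow> \<phi> 1 = 1 \<and> (\<forall>x y. \<phi> (x + y) = \<phi> x + \<phi> y) \<and>
     (\<forall>x y. \<phi> (x * y) = \<phi> x * \<phi> y) \<and> (\<forall>c a. \<phi> c * a = a * \<phi> c)"

definition eps_plus :: "nat \<Rightarrow> int \<Rightarrow> int \<Rightarrow> int" where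
  "eps_plus n i j = (if j mod int n = i mod int n then 1
                     else if j mod int n = (i - 1) mod int n then -1 else 0)"

definition alpha :: "nat \<Rightarrow> int \<Rightarrow> int \<Rightarrow> int" where
  "alpha n i j = (if j mod int n = i mod int n then 1
                  else if j mod int n = (i + 1) mod int n then -1 else 0)"

definition T_rels :: "nat \<Rightarrow> nat \<Rightarrow> (qv \<Rightarrow> 'a::ring_1) \<Rightarrow> (int \<Rightarrow> 'a) \<Rightarrow> (int \<Rightarrow> 'a)
    \<Rightarrow> (int \<Rightarrow> 'a) \<Rightarrow> (int \<Rightarrow> 'a) \<Rightarrow> bool" where
  "T_rels n r \<phi> E F K Kinv \<longleftrightarrow>
    (\<forall>i. E (i + int n) = E i \<and> F (i + int n) = F i \<and> K (i + int n) = K i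
         \<and> Kinv (i + int n) = Kinv i) \<and>
    (\<forall>i j. K i * K j = K j * K i) \<and>
    (\<forall>i. K i * Kinv i = 1 \<and> Kinv i * K i = 1) \<and>
    (\<forall>i j. K i * E j = \<phi> (vq powi eps_plus n i j) * E j * K i) \<and>
    (\<forall>i j. K i * F j = \<phi> (vq powi (- eps_plus n i j)) * F j * K i) \<and>
    (\<forall>i j. E i * F j - F j * E i =
        (if i mod int n = j mod int n
         then (K i * Kinv (i + 1) - Kinv i * K (i + 1)) * \<phi> (1 / (vq - inverse vq))
         else 0)) \<and>
    (\<forall>i j. (i - j) mod int n \<noteq> 1 mod int n \<and> (i - j) mod int n \<noteq> (-1) mod int n \<longrightarrow>
        E i * E j = E j * E i \<and> F i * F j = F j * F i) \<and>
    (\<forall>i j. (i - j) mod int n = 1 mod int n \<or> (i - j) mod int n = (-1) mod int n \<longrightarrow>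
        E i * E i * E j - \<phi> (vq + inverse vq) * E i * E j * E i + E j * E i * E i = 0 \<and>
        F i * F i * F j - \<phi> (vq + inverse vq) * F i * F j * F i + F j * F i * F i = 0) \<and>
    prod_list (map K [1..int n]) = \<phi> (vq ^ r) \<and>
    (\<forall>i. prod_list (map (\<lambda>j. K i - \<phi> (vq ^ j)) [0..<r+1]) = 0)"

text \<open>The idempotent 1_lambda (lam an n-periodic integer sequence; only
  used for compositions, where all entries are nonnegative).\<close>
definition one_lam :: "nat \<Rightarrow> (qv \<Rightarrow> 'a::ring_1) \<Rightarrow> (int \<Rightarrow> 'a) \<Rightarrow> (int \<Rightarrow> 'a)
    \<Rightarrow> (int \<Rightarrow> int) \<Rightarrow> 'a" where
  "one_lam n \<phi> K Kinv lam =
     prod_list (map (\<lambda>i. prod_list (map (\<lambda>s.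
        (K i * \<phi> (vq powi (- s + 1)) - Kinv i * \<phi> (vq powi (s - 1)))
          * \<phi> (1 / (vq powi s - vq powi (- s))))
       [1..lam i])) [1..int n])"

definition comp_nr :: "nat \<Rightarrow> nat \<Rightarrow> (int \<Rightarrow> int) \<Rightarrow> bool" where
  "comp_nr n r lam \<longleftrightarrow> (\<forall>i. lam (i + int n) = lam i) \<and> (\<forall>i. lam i \<ge> 0) \<and>
     sum lam {1..int n} = int r"

end

theory Submission
  imports Defs
begin


lemma vq_nz: "vq \<noteq> 0"
  by (simp add: vq_def Zero_fract_def eq_fract)

lemma vq_pow: "vq ^ k = Fract ([:0,1:] ^ k) 1"
  by (induct k) (simp_all add: vq_def One_fract_def)

lemma vq_pow_eq1: "vq ^ k = 1 \<Longrightarrow> k = 0"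
proof -
  assume "vq ^ k = 1"
  hence "([:0,1:] :: rat poly) ^ k = 1" by (simp add: vq_pow One_fract_def eq_fract)
  hence "degree (([:0,1:] :: rat poly) ^ k) = 0" by simp
  thus "k = 0" using degree_linear_power[of "0::rat" k] by simp
qed

lemma vq_powi_inj: "vq powi a = vq powi b \<Longrightarrow> a = b"
proof -
  have key: "vq powi a = vq powi b \<Longrightarrow> a \<le> b \<Longrightarrow> a = b" for a b
  proof -
    assume h: "vq powi a = vq powi b" "a \<le> b"
    have "vq powi b = vq powi a * vq powi (b - a)"
      using power_int_add[of vq a "b-a"] vq_nz by simp
    also have "vq powi (b - a) = vq ^ nat (b - a)"
      using h(2) by (metis le_add_diff_inverse2 nat_eq_iff2 power_int_of_nat diff_ge_0_iff_ge)
    finally have "vq powi a * vq ^ nat (b-a) = vq powi a * 1" using h by simp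
    hence "vq ^ nat (b-a) = 1" using vq_nz by simp
    thus ?thesis using vq_pow_eq1 h(2) by fastforce
  qed
  assume "vq powi a = vq powi b"
  thus "a = b" using key[of a b] key[of b a] by (cases "a \<le> b") auto
qed



definition peval :: "(qv \<Rightarrow> 'a::ring_1) \<Rightarrow> qv poly \<Rightarrow> 'a \<Rightarrow> 'a" where
  "peval \<phi> p X = foldr (\<lambda>a acc. \<phi> a + X * acc) (coeffs p) 0"

context
  fixes \<phi> :: "qv \<Rightarrow> 'a::ring_1"
  assumes alg: "qv_algebra \<phi>"
begin

lemma phi_1: "\<phi> 1 = 1" using alg unfolding qv_algebra_def by blast
lemma phi_add: "\<phi> (x + y) = \<phi> x + \<phi> y" using alg unfolding qv_algebra_def by blast
lemma phi_mult: "\<phi> (x * y) = \<phi> x * \<phi> y" using alg unfolding qv_algebra_def by blast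
lemma phi_central: "\<phi> c * a = a * \<phi> c" using alg unfolding qv_algebra_def by blast
lemma phi_0: "\<phi> 0 = 0" using phi_add[of 0 0] by simp
lemma phi_uminus: "\<phi> (- x) = - \<phi> x"
  using phi_add[of x "-x"] phi_0 by (metis minus_unique add.right_inverse)
lemma phi_diff: "\<phi> (x - y) = \<phi> x - \<phi> y"
  using phi_add[of x "-y"] phi_uminus[of y] by simp

lemma phi_cancel: "x \<noteq> 0 \<Longrightarrow> \<phi> x * b = 0 \<Longrightarrow> b = 0"
proof -
  assume "x \<noteq> 0" "\<phi> x * b = 0"
  have "b = \<phi> (inverse x * x) * b" using \<open>x \<noteq> 0\<close> phi_1 by simp
  also have "\<dots> = \<phi> (inverse x) * (\<phi> x * b)" by (simp add: phi_mult mult.assoc)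
  finally show "b = 0" using \<open>\<phi> x * b = 0\<close> by simp
qed

lemma peval_0[simp]: "peval \<phi> 0 X = 0" by (simp add: peval_def)

lemma peval_pCons: "peval \<phi> (pCons a p) X = \<phi> a + X * peval \<phi> p X"
  by (cases "a = 0 \<and> p = 0") (auto simp: peval_def cCons_def phi_0)

lemma peval_add: "peval \<phi> (p + q) X = peval \<phi> p X + peval \<phi> q X"
proof (induct p arbitrary: q rule: pCons_induct)
  case 0 then show ?case by simp
next
  case (pCons a p)
  then show ?case
    by (cases q rule: pCons_cases) (simp add: peval_pCons phi_add distrib_left add_ac)
qed

lemma peval_smult: "peval \<phi> (smult c p) X = \<phi> c * peval \<phi> p X"
proof (induct p rule: pCons_induct)
  case 0 then show ?case by simp
next
  case (pCons a p)
  then show ?case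
  proof -
    have "\<phi> c * (X * peval \<phi> p X) = X * (\<phi> c * peval \<phi> p X)"
      by (metis mult.assoc phi_central)
    then show ?case using pCons by (simp add: peval_pCons phi_mult distrib_left)
  qed
qed

lemma peval_mult: "peval \<phi> (p * q) X = peval \<phi> p X * peval \<phi> q X"
proof (induct p rule: pCons_induct)
  case 0 then show ?case by simp
next
  case (pCons a p)
  have "pCons a p * q = smult a q + pCons 0 (p * q)" by simp
  then show ?case using pCons
    by (simp only: peval_add peval_smult peval_pCons phi_0) (simp add: distrib_right mult.assoc)
qed

lemma peval_1[simp]: "peval \<phi> 1 X = 1"
  using peval_pCons[of 1 0 X] by (simp add: phi_1 one_pCons)

lemma peval_lin: "peval \<phi> [:- c, 1:] X = X - \<phi> c"
  by (simp add: peval_pCons phi_1 phi_uminus)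

lemma peval_sum: "peval \<phi> (sum f A) X = (\<Sum>a\<in>A. peval \<phi> (f a) X)"
  by (induct A rule: infinite_finite_induct) (simp_all add: peval_add)

lemma peval_prod_list: "peval \<phi> (prod_list ps) X = prod_list (map (\<lambda>p. peval \<phi> p X) ps)"
  by (induct ps) (simp_all add: peval_mult)

lemma peval_comm: "Y * X = X * Y \<Longrightarrow> Y * peval \<phi> p X = peval \<phi> p X * Y"
proof (induct p rule: pCons_induct)
  case 0 then show ?case by simp
next
  case (pCons a p)
  have ih: "Y * peval \<phi> p X = peval \<phi> p X * Y" using pCons by blast
  have "Y * (X * peval \<phi> p X) = (Y * X) * peval \<phi> p X" by (simp only: mult.assoc)
  also have "\<dots> = X * (Y * peval \<phi> p X)" using pCons(3) by (simp only: mult.assoc)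
  also have "\<dots> = (X * peval \<phi> p X) * Y" using ih by (simp only: mult.assoc)
  finally have 1: "Y * (X * peval \<phi> p X) = (X * peval \<phi> p X) * Y" .
  have 2: "Y * \<phi> a = \<phi> a * Y" using phi_central[of a Y] by simp
  show ?case unfolding peval_pCons distrib_left distrib_right 1 2 ..
qed

end


definition lag :: "nat \<Rightarrow> int \<Rightarrow> qv poly" where
  "lag r m = smult (inverse (\<Prod>t\<in>{0..int r}-{m}. (vq powi m - vq powi t)))
                   (\<Prod>t\<in>{0..int r}-{m}. [:-(vq powi t), 1:])"

lemma lag_poly: "k \<in> {0..int r} \<Longrightarrow> m \<in> {0..int r} \<Longrightarrow>
   poly (lag r m) (vq powi k) = (if k = m then 1 else 0)"
proof -
  assume k: "k \<in> {0..int r}" and m: "m \<in> {0..int r}"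
  have nz: "(\<Prod>t\<in>{0..int r}-{m}. (vq powi m - vq powi t)) \<noteq> 0"
    using vq_powi_inj by (auto simp: prod_zero_iff)
  show ?thesis
  proof (cases "k = m")
    case True
    then show ?thesis using nz by (simp add: lag_def poly_prod)
  next
    case False
    then have "(\<Prod>t\<in>{0..int r}-{m}. poly [:-(vq powi t), 1:] (vq powi k)) = 0"
      using k by (subst prod_zero_iff) auto
    then show ?thesis using False by (simp add: lag_def poly_prod)
  qed
qed

lemma lag_degree: "m \<in> {0..int r} \<Longrightarrow> degree (lag r m) \<le> r"
proof -
  assume m: "m \<in> {0..int r}"
  have "degree (\<Prod>t\<in>{0..int r}-{m}. [:-(vq powi t), 1:]) \<le> (\<Sum>t\<in>{0..int r}-{m}. 1)"
    using degree_prod_sum_le[of "{0..int r}-{m}" "\<lambda>t. [:-(vq powi t), 1:]"] by (simp add: o_def)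
  also have "\<dots> = r" using m by (simp add: card_Diff_singleton)
  finally show ?thesis unfolding lag_def using degree_smult_le order_trans by blast
qed

lemma lag_sum: "(\<Sum>m\<in>{0..int r}. lag r m) = 1"
proof (rule poly_eqI_degree[where A = "(\<lambda>t. vq powi t) ` {0..int r}"])
  fix x assume "x \<in> (\<lambda>t. vq powi t) ` {0..int r}"
  then obtain k where k: "k \<in> {0..int r}" "x = vq powi k" by blast
  have "poly (\<Sum>m\<in>{0..int r}. lag r m) x = (\<Sum>m\<in>{0..int r}. if k = m then 1 else 0)"
    unfolding poly_sum k(2) by (rule sum.cong) (auto simp: lag_poly[OF k(1)])
  also have "\<dots> = 1" using k(1) by simp
  finally show "poly (\<Sum>m\<in>{0..int r}. lag r m) x = poly 1 x" by simp
next
  have c: "card ((\<lambda>t. vq powi t) ` {0..int r}) = Suc r"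
    by (subst card_image) (auto intro: inj_onI vq_powi_inj)
  show "degree (\<Sum>m\<in>{0..int r}. lag r m) < card ((\<lambda>t. vq powi t) ` {0..int r})"
    unfolding c using degree_sum_le[of "{0..int r}" "lag r" r] lag_degree by fastforce
  show "degree (1::qv poly) < card ((\<lambda>t. vq powi t) ` {0..int r})" unfolding c by simp
qed

lemma lag_lin: "m \<in> {0..int r} \<Longrightarrow>
  [:-(vq powi m), 1:] * lag r m = smult (inverse (\<Prod>t\<in>{0..int r}-{m}. (vq powi m - vq powi t)))
     (prod_list (map (\<lambda>j. [:-(vq ^ j), 1:]) [0..<r+1]))"
proof -
  assume m: "m \<in> {0..int r}"
  have e1: "[:-(vq powi m), 1:] * (\<Prod>t\<in>{0..int r}-{m}. [:-(vq powi t), 1:])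
        = (\<Prod>t\<in>{0..int r}. [:-(vq powi t), 1:])"
    using m by (simp add: prod.remove)
  have e2: "{0..int r} = int ` {0..<r+1}"
    by (auto simp: image_iff intro!: bexI[where x="nat _"])
  have e3: "(\<Prod>t\<in>int ` {0..<r+1}. [:-(vq powi t), 1:]) = (\<Prod>j\<in>{0..<r+1}. [:-(vq ^ j), 1:])"
    by (subst prod.reindex) (auto simp: o_def)
  have e4: "(\<Prod>j\<in>{0..<r+1}. [:-(vq ^ j), 1:]) = prod_list (map (\<lambda>j. [:-(vq ^ j), 1:]) [0..<r+1])"
    by (subst prod.distinct_set_conv_list[symmetric]) auto
  have "[:-(vq powi m), 1:] * (\<Prod>t\<in>{0..int r}-{m}. [:-(vq powi t), 1:])
     = prod_list (map (\<lambda>j. [:-(vq ^ j), 1:]) [0..<r+1])"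
    using e1 e2 e3 e4 by metis
  then show ?thesis unfolding lag_def mult_smult_right by simp
qed



definition sc :: "int \<Rightarrow> int \<Rightarrow> qv" where
  "sc l m = prod_list (map (\<lambda>s. (vq powi m * vq powi (-s+1) - vq powi (-m) * vq powi (s-1))
                                * (1 / (vq powi s - vq powi (-s)))) [1..l])"

lemma sc_zero: "0 \<le> m \<Longrightarrow> m < l \<Longrightarrow> sc l m = 0"
proof -
  assume "0 \<le> m" "m < l"
  then have "m + 1 \<in> set [1..l]" by simp
  moreover have "(vq powi m * vq powi (-(m+1)+1) - vq powi (-m) * vq powi ((m+1)-1))
                                * (1 / (vq powi (m+1) - vq powi (-(m+1)))) = 0" by simp
  ultimately show ?thesis unfolding sc_def prod_list_zero_iff by (auto simp: image_iff intro!: bexI[of _ "m+1"])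
qed

lemma sc_one: "sc l l = 1"
proof -
  define N where "N t = vq powi t - vq powi (-t)" for t
  have Nnz: "N s \<noteq> 0" if "1 \<le> s" for s
    using vq_powi_inj[of s "-s"] that by (auto simp: N_def)
  have fac: "(vq powi l * vq powi (-s+1) - vq powi (-l) * vq powi (s-1)) * (1 / (vq powi s - vq powi (-s)))
        = N (l + 1 - s) / N s" for s
  proof -
    have a: "vq powi l * vq powi (-s+1) = vq powi (l+1-s)"
      using power_int_add[of vq l "-s+1"] vq_nz by (simp add: algebra_simps)
    have b: "vq powi (-l) * vq powi (s-1) = vq powi (-(l+1-s))"
      using power_int_add[of vq "-l" "s-1"] vq_nz by (simp add: algebra_simps)
    show ?thesis unfolding a b N_def by simp
  qed
  have "sc l l = (\<Prod>s\<in>{1..l}. N (l + 1 - s) / N s)"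
    unfolding sc_def fac by (subst prod.distinct_set_conv_list[symmetric]) auto
  also have "\<dots> = (\<Prod>s\<in>{1..l}. N (l + 1 - s)) / (\<Prod>s\<in>{1..l}. N s)"
    by (simp add: prod_dividef)
  also have "(\<Prod>s\<in>{1..l}. N (l + 1 - s)) = (\<Prod>s\<in>{1..l}. N s)"
    by (rule prod.reindex_bij_witness[where i="\<lambda>s. l + 1 - s" and j="\<lambda>s. l + 1 - s"]) auto
  also have "(\<Prod>s\<in>{1..l}. N s) \<noteq> 0" using Nnz by (auto simp: prod_zero_iff)
  ultimately show ?thesis by simp
qed

fun chs :: "int set \<Rightarrow> nat \<Rightarrow> int list set" where
  "chs M 0 = {[]}"
| "chs M (Suc k) = (\<lambda>(m, ms). m # ms) ` (M \<times> chs M k)"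

lemma chs_iff: "ms \<in> chs M k \<longleftrightarrow> length ms = k \<and> set ms \<subseteq> M"
proof (induct k arbitrary: ms)
  case 0 then show ?case by auto
next
  case (Suc k)
  show ?case
  proof (cases ms)
    case Nil then show ?thesis by auto
  next
    case (Cons a l) then show ?thesis using Suc by (auto simp: image_iff)
  qed
qed

lemma chs_finite: "finite M \<Longrightarrow> finite (chs M k)"
  by (induct k) auto

lemma expand:
  fixes h :: "'j \<Rightarrow> int \<Rightarrow> 'b::ring_1"
  assumes "finite M"
  shows "prod_list (map (\<lambda>j. \<Sum>m\<in>M. h j m) js) = (\<Sum>ms\<in>chs M (length js). prod_list (map2 h js ms))"
proof (induct js)
  case Nil then show ?case by simp
next
  case (Cons a js)
  have "prod_list (map (\<lambda>j. \<Sum>m\<in>M. h j m) (a # js))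
      = (\<Sum>m\<in>M. h a m) * (\<Sum>ms\<in>chs M (length js). prod_list (map2 h js ms))"
    using Cons by simp
  also have "\<dots> = (\<Sum>m\<in>M. \<Sum>ms\<in>chs M (length js). h a m * prod_list (map2 h js ms))"
    by (simp add: sum_distrib_left sum_distrib_right sum.swap[of _ M])
  also have "\<dots> = (\<Sum>p\<in>M \<times> chs M (length js). h a (fst p) * prod_list (map2 h js (snd p)))"
    by (simp add: sum.cartesian_product case_prod_beta)
  also have "\<dots> = (\<Sum>ms\<in>chs M (length (a # js)). prod_list (map2 h (a # js) ms))"
    by (simp add: sum.reindex inj_on_def case_prod_beta)
  finally show ?case .
qed

lemma map2_diag: "map2 f xs (map g xs) = map (\<lambda>x. f x (g x)) xs"
  by (induct xs) auto

lemma sum_list_strict: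
  fixes xs ys :: "int list"
  assumes "length xs = length ys" "\<And>i. i < length xs \<Longrightarrow> xs ! i \<le> ys ! i" "xs \<noteq> ys"
  shows "sum_list xs < sum_list ys"
proof -
  obtain i where i: "i < length xs" "xs ! i \<noteq> ys ! i" using assms(1,3) nth_equalityI by blast
  have "(\<Sum>k\<in>{0..<length xs}. xs ! k) < (\<Sum>k\<in>{0..<length xs}. ys ! k)"
    by (rule sum_strict_mono_ex1) (use assms(2) i in \<open>auto intro!: bexI[of _ i] simp: order.strict_iff_order\<close>)
  then show ?thesis using assms(1) by (simp add: sum_list_sum_nth atLeast0LessThan)
qed



lemma eps_alpha: "eps_plus n j i = alpha n i j"
proof -
  have "(i mod int n = (j - 1) mod int n) = (j mod int n = (i + 1) mod int n)"
  proof -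
    have "(i mod int n = (j - 1) mod int n) = (int n dvd i - (j - 1))" by (rule mod_eq_dvd_iff)
    also have "\<dots> = (int n dvd j - (i + 1))"
      by (metis dvd_minus_iff minus_diff_eq diff_diff_eq2 diff_add_eq)
    also have "\<dots> = (j mod int n = (i + 1) mod int n)" by (rule mod_eq_dvd_iff[symmetric])
    finally show ?thesis .
  qed
  then show ?thesis unfolding eps_plus_def alpha_def by auto
qed

lemma modeq_range:
  fixes a b :: int
  assumes "1 \<le> a" "a \<le> int n" "1 \<le> b" "b \<le> int n" "a mod int n = b mod int n"
  shows "a = b"
proof (rule ccontr)
  assume "a \<noteq> b"
  have "int n dvd a - b" using assms(5) by (simp add: mod_eq_dvd_iff)
  then have "\<bar>int n\<bar> \<le> \<bar>a - b\<bar>" using \<open>a \<noteq> b\<close> by (intro dvd_imp_le_int) auto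
  then show False using assms(1-4) by linarith
qed

lemma periodic_nat: "(\<And>j. f (j + int n) = f j) \<Longrightarrow> f (x + int n * int k) = f x"
proof (induct k)
  case 0 then show ?case by simp
next
  case (Suc k)
  have "f (x + int n * int (Suc k)) = f ((x + int n * int k) + int n)" by (simp add: algebra_simps)
  then show ?case using Suc by simp
qed

lemma periodic_mod: assumes "\<And>j. f (j + int n) = f j" shows "f x = f (x mod int n)"
proof (cases "x div int n \<ge> 0")
  case True
  have "f (x mod int n + int n * int (nat (x div int n))) = f (x mod int n)"
    by (rule periodic_nat) (rule assms)
  then show ?thesis using True by simp
next
  case False
  have "f (x + int n * int (nat (- (x div int n)))) = f x"
    by (rule periodic_nat) (rule assms)
  moreover have "x + int n * int (nat (- (x div int n))) = x mod int n"
    using False by (simp add: minus_div_mult_eq_mod[symmetric] algebra_simps)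
  ultimately show ?thesis by simp
qed

lemma prod_list_zero: "(0::'a::semiring_1) \<in> set xs \<Longrightarrow> prod_list xs = 0"
  by (induct xs) auto

lemma alpha_cases:
  assumes n2: "n \<ge> 2" and i: "1 \<le> i" "i \<le> int n" and j: "1 \<le> j" "j \<le> int n"
  shows "alpha n i j = (if j = i then 1 else if j = (if i < int n then i + 1 else 1) then -1 else 0)"
proof -
  define j1 where "j1 = (if i < int n then i + 1 else 1)"
  have j1r: "1 \<le> j1" "j1 \<le> int n" using i n2 by (auto simp: j1_def)
  have j1m: "j1 mod int n = (i + 1) mod int n" using i by (auto simp: j1_def)
  have "j1 \<noteq> i" using i n2 by (auto simp: j1_def)
  have a: "(j mod int n = i mod int n) = (j = i)" using modeq_range[OF j i] by auto
  have b: "(j mod int n = (i + 1) mod int n) = (j = j1)" using modeq_range[OF j j1r] j1m by auto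
  show ?thesis unfolding alpha_def a b j1_def[symmetric] by simp
qed

lemma alpha_sum:
  assumes n2: "n \<ge> 2" and i: "1 \<le> i" "i \<le> int n"
  shows "sum (alpha n i) {1..int n} = 0"
proof -
  define j1 where "j1 = (if i < int n then i + 1 else 1)"
  have j1r: "1 \<le> j1" "j1 \<le> int n" using i n2 by (auto simp: j1_def)
  have "j1 \<noteq> i" using i n2 by (auto simp: j1_def)
  have "sum (alpha n i) {1..int n} = (\<Sum>j\<in>{1..int n}. (if j = i then 1 else 0) - (if j = j1 then 1 else 0))"
    by (rule sum.cong) (use alpha_cases[OF n2 i] \<open>j1 \<noteq> i\<close> in \<open>auto simp: j1_def\<close>)
  also have "\<dots> = 0" using i j1r by (simp add: sum_subtractf)
  finally show ?thesis .
qed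



lemma sum_single: "finite A \<Longrightarrow> (\<And>x. x \<in> A \<Longrightarrow> x \<noteq> a \<Longrightarrow> f x = 0) \<Longrightarrow>
  sum f A = (if a \<in> A then f a else 0)"
proof -
  assume fin: "finite A" and z: "\<And>x. x \<in> A \<Longrightarrow> x \<noteq> a \<Longrightarrow> f x = 0"
  show ?thesis
  proof (cases "a \<in> A")
    case True
    then have "sum f A = f a + sum f (A - {a})" by (simp add: fin sum.remove)
    also have "sum f (A - {a}) = 0" by (rule sum.neutral) (use z in auto)
    finally show ?thesis using True by simp
  next
    case False then show ?thesis using z by (auto intro: sum.neutral)
  qed
qed

context
  fixes \<phi> :: "qv \<Rightarrow> 'a::ring_1" and E F K Kinv :: "int \<Rightarrow> 'a" and n r :: nat
  assumes alg: "qv_algebra \<phi>" and rels: "T_rels n r \<phi> E F K Kinv"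
begin

lemma Kcomm: "K a * K b = K b * K a" using rels unfolding T_rels_def by blast
lemma KKinv: "Kinv a * K a = 1" using rels unfolding T_rels_def by blast
lemma KE: "K a * E b = \<phi> (vq powi eps_plus n a b) * E b * K a" using rels unfolding T_rels_def by blast
lemma KF: "K a * F b = \<phi> (vq powi (- eps_plus n a b)) * F b * K a" using rels unfolding T_rels_def by blast
lemma Kprod: "prod_list (map K [1..int n]) = \<phi> (vq ^ r)" using rels unfolding T_rels_def by blast
lemma Kmin: "prod_list (map (\<lambda>j. K a - \<phi> (vq ^ j)) [0..<r+1]) = 0" using rels unfolding T_rels_def by blast
lemma Eper: "E (a + int n) = E a" using rels unfolding T_rels_def by blast
lemma Fper: "F (a + int n) = F a" using rels unfolding T_rels_def by blast

lemma phi_lc: "x * (\<phi> c * y) = \<phi> c * (x * y)"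
  by (metis mult.assoc phi_central[OF alg])

lemma phi_pow: "\<phi> (vq powi a) * (\<phi> (vq powi b) * y) = \<phi> (vq powi (a + b)) * y"
  by (simp add: phi_mult[OF alg, symmetric] power_int_add vq_nz mult.assoc[symmetric])

definition P :: "int \<Rightarrow> int \<Rightarrow> 'a" where
  "P a m = (if m \<in> {0..int r} then peval \<phi> (lag r m) (K a) else 0)"

lemma P_out: "m \<notin> {0..int r} \<Longrightarrow> P a m = 0" by (auto simp: P_def)

lemma P_sum: "(\<Sum>m\<in>{0..int r}. P a m) = 1"
proof -
  have "(\<Sum>m\<in>{0..int r}. P a m) = (\<Sum>m\<in>{0..int r}. peval \<phi> (lag r m) (K a))"
    by (rule sum.cong) (auto simp: P_def)
  also have "\<dots> = 1" by (simp add: peval_sum[OF alg, symmetric] lag_sum peval_1[OF alg])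
  finally show ?thesis .
qed

lemma P_comm: "K b * P a m = P a m * K b"
  by (simp add: P_def peval_comm[OF alg] Kcomm)

lemma P_K: "K a * P a m = \<phi> (vq powi m) * P a m"
proof (cases "m \<in> {0..int r}")
  case False then show ?thesis by (auto simp: P_def)
next
  case True
  have "K a * P a m - \<phi> (vq powi m) * P a m = peval \<phi> ([:-(vq powi m), 1:] * lag r m) (K a)"
    using True unfolding P_def peval_mult[OF alg] peval_lin[OF alg] left_diff_distrib by simp
  also have "\<dots> = 0" unfolding lag_lin[OF True]
    by (simp only: peval_smult[OF alg] peval_prod_list[OF alg] map_map o_def peval_lin[OF alg] Kmin mult_zero_right)
  finally show ?thesis by simp
qed

lemma P_Kr: "P a m * K a = \<phi> (vq powi m) * P a m"
  using P_K P_comm by metis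

lemma P_Kinv: "Kinv a * P a m = \<phi> (vq powi (-m)) * P a m"
proof -
  have "P a m = Kinv a * (K a * P a m)" by (simp add: mult.assoc[symmetric] KKinv)
  also have "\<dots> = \<phi> (vq powi m) * (Kinv a * P a m)" by (simp add: P_K phi_lc)
  finally have "\<phi> (vq powi (-m)) * P a m = \<phi> (vq powi (-m)) * (\<phi> (vq powi m) * (Kinv a * P a m))"
    by simp
  also have "\<dots> = Kinv a * P a m" by (simp add: phi_pow phi_1[OF alg])
  finally show ?thesis by simp
qed

lemma P_shift:
  assumes KX: "K a * X = \<phi> (vq powi e) * X * K a"
  shows "X * P a m = P a (m + e) * X"
proof -
  have ortho: "P a b * X * P a c = 0" if "b \<noteq> c + e" for b c
  proof -
    have "\<phi> (vq powi b) * (P a b * X * P a c) = (P a b * K a) * X * P a c"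
      by (simp add: P_Kr mult.assoc)
    also have "\<dots> = P a b * (\<phi> (vq powi e) * X * K a) * P a c"
      by (simp only: mult.assoc[symmetric] KX[symmetric])
    also have "\<dots> = P a b * (\<phi> (vq powi e) * (X * (\<phi> (vq powi c) * P a c)))"
      by (simp only: mult.assoc P_K)
    also have "\<dots> = \<phi> (vq powi e) * (\<phi> (vq powi c) * (P a b * X * P a c))"
      by (simp only: phi_lc[of "P a b"] phi_lc[of X] mult.assoc)
    also have "\<dots> = \<phi> (vq powi (c + e)) * (P a b * X * P a c)"
      by (simp add: phi_pow add.commute)
    finally have "\<phi> (vq powi b - vq powi (c + e)) * (P a b * X * P a c) = 0"
      by (simp add: phi_diff[OF alg] left_diff_distrib)
    moreover have "vq powi b - vq powi (c + e) \<noteq> 0" using that vq_powi_inj by auto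
    ultimately show ?thesis using phi_cancel[OF alg] by blast
  qed
  have "X * P a m = (\<Sum>b\<in>{0..int r}. P a b) * X * P a m" by (simp add: P_sum)
  also have "\<dots> = (\<Sum>b\<in>{0..int r}. P a b * X * P a m)" by (simp add: sum_distrib_right)
  also have "\<dots> = P a (m + e) * X * P a m"
    by (subst sum_single[where a="m+e"]) (auto intro: ortho simp: P_out)
  also have "\<dots> = (\<Sum>c\<in>{0..int r}. P a (m + e) * X * P a c)"
    by (subst sum_single[where a="m"]) (auto intro: ortho simp: P_out)
  also have "\<dots> = P a (m + e) * X" by (simp add: sum_distrib_left[symmetric] P_sum mult.assoc)
  finally show ?thesis .
qed


lemma fac_P: "(K a * \<phi> x - Kinv a * \<phi> y) * \<phi> z * P a m
   = \<phi> ((vq powi m * x - vq powi (-m) * y) * z) * P a m"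
proof -
  have "(K a * \<phi> x - Kinv a * \<phi> y) * \<phi> z * P a m
      = \<phi> z * (\<phi> x * (K a * P a m) - \<phi> y * (Kinv a * P a m))"
  proof -
    have "(K a * \<phi> x - Kinv a * \<phi> y) * \<phi> z * P a m = \<phi> z * ((K a * \<phi> x - Kinv a * \<phi> y) * P a m)"
      by (metis mult.assoc phi_central[OF alg])
    also have "(K a * \<phi> x - Kinv a * \<phi> y) * P a m = \<phi> x * (K a * P a m) - \<phi> y * (Kinv a * P a m)"
      by (simp only: left_diff_distrib mult.assoc phi_lc[of "K a"] phi_lc[of "Kinv a"])
    finally show ?thesis .
  qed
  also have "\<dots> = \<phi> (z * (x * vq powi m)) * P a m - \<phi> (z * (y * vq powi (-m))) * P a m"
    by (simp only: P_K P_Kinv right_diff_distrib phi_mult[OF alg] mult.assoc)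
  also have "\<dots> = \<phi> ((vq powi m * x - vq powi (-m) * y) * z) * P a m"
    by (simp only: phi_diff[OF alg, symmetric] left_diff_distrib[symmetric]) (simp add: algebra_simps)
  finally show ?thesis .
qed

lemma prod_act: "(\<And>s. f s * Y = \<phi> (g s) * Y) \<Longrightarrow>
   prod_list (map f ss) * Y = \<phi> (prod_list (map g ss)) * Y"
proof (induct ss)
  case Nil then show ?case by (simp add: phi_1[OF alg])
next
  case (Cons s ss)
  have "prod_list (map f (s # ss)) * Y = f s * (prod_list (map f ss) * Y)" by (simp add: mult.assoc)
  also have "\<dots> = f s * (\<phi> (prod_list (map g ss)) * Y)" using Cons by simp
  also have "\<dots> = \<phi> (prod_list (map g ss)) * (f s * Y)" by (rule phi_lc)
  also have "\<dots> = \<phi> (prod_list (map g ss)) * (\<phi> (g s) * Y)" using Cons by simp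
  also have "\<dots> = \<phi> (prod_list (map g (s # ss))) * Y"
    by (simp only: mult.assoc[symmetric] phi_mult[OF alg, symmetric]) (simp add: mult.commute)
  finally show ?case .
qed

lemma G_P: "prod_list (map (\<lambda>s. (K a * \<phi> (vq powi (- s + 1)) - Kinv a * \<phi> (vq powi (s - 1)))
     * \<phi> (1 / (vq powi s - vq powi (- s)))) ss) * P a m
   = \<phi> (prod_list (map (\<lambda>s. (vq powi m * vq powi (-s+1) - vq powi (-m) * vq powi (s-1))
                                * (1 / (vq powi s - vq powi (-s)))) ss)) * P a m"
  by (rule prod_act) (rule fac_P)

lemma G_sum: "prod_list (map (\<lambda>s. (K a * \<phi> (vq powi (- s + 1)) - Kinv a * \<phi> (vq powi (s - 1)))
     * \<phi> (1 / (vq powi s - vq powi (- s)))) [1..l]) = (\<Sum>m\<in>{0..int r}. \<phi> (sc l m) * P a m)"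
  by (subst mult_1_right[symmetric], subst P_sum[symmetric, of a])
     (simp only: sum_distrib_left G_P sc_def)

lemma scal_prod: "length js = length ms \<Longrightarrow>
  prod_list (map2 (\<lambda>j m. \<phi> (c j m) * P j m) js ms) = \<phi> (prod_list (map2 c js ms)) * prod_list (map2 P js ms)"
proof (induct js ms rule: list_induct2)
  case Nil then show ?case by (simp add: phi_1[OF alg])
next
  case (Cons a js m ms)
  have "prod_list (map2 (\<lambda>j m. \<phi> (c j m) * P j m) (a # js) (m # ms))
      = \<phi> (c a m) * (P a m * (\<phi> (prod_list (map2 c js ms)) * prod_list (map2 P js ms)))"
    using Cons by (simp add: mult.assoc)
  also have "\<dots> = \<phi> (c a m) * (\<phi> (prod_list (map2 c js ms)) * (P a m * prod_list (map2 P js ms)))"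
    by (simp only: phi_lc[of "P a m"])
  also have "\<dots> = \<phi> (prod_list (map2 c (a # js) (m # ms))) * prod_list (map2 P (a # js) (m # ms))"
    by (simp add: phi_mult[OF alg] mult.assoc)
  finally show ?case .
qed

lemma Kprod_comm: "prod_list (map K js) * P a m = P a m * prod_list (map K js)"
proof (induct js)
  case Nil then show ?case by simp
next
  case (Cons b js)
  have "prod_list (map K (b # js)) * P a m = K b * (prod_list (map K js) * P a m)" by (simp add: mult.assoc)
  also have "\<dots> = (K b * P a m) * prod_list (map K js)" using Cons by (simp add: mult.assoc)
  also have "\<dots> = P a m * prod_list (map K (b # js))" by (simp add: P_comm mult.assoc)
  finally show ?case .
qed

lemma weight: "length js = length ms \<Longrightarrow>
  prod_list (map K js) * prod_list (map2 P js ms) = \<phi> (vq powi sum_list ms) * prod_list (map2 P js ms)"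
proof (induct js ms rule: list_induct2)
  case Nil then show ?case by (simp add: phi_1[OF alg])
next
  case (Cons a js m ms)
  have "prod_list (map K (a # js)) * prod_list (map2 P (a # js) (m # ms))
      = K a * ((prod_list (map K js) * P a m) * prod_list (map2 P js ms))" by (simp add: mult.assoc)
  also have "\<dots> = (K a * P a m) * (prod_list (map K js) * prod_list (map2 P js ms))"
    by (simp only: Kprod_comm mult.assoc)
  also have "\<dots> = \<phi> (vq powi m) * (P a m * (\<phi> (vq powi sum_list ms) * prod_list (map2 P js ms)))"
    using Cons by (simp add: P_K mult.assoc)
  also have "\<dots> = \<phi> (vq powi m) * (\<phi> (vq powi sum_list ms) * (P a m * prod_list (map2 P js ms)))"
    by (simp only: phi_lc[of "P a m"])
  also have "\<dots> = \<phi> (vq powi sum_list (m # ms)) * prod_list (map2 P (a # js) (m # ms))"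
    by (simp add: phi_pow)
  finally show ?case .
qed

lemma prod_list_ones: "prod_list (map (\<lambda>j. 1) xs) = (1::qv)"
  by (induct xs) auto

lemma one_lam_e:
  assumes cn: "comp_nr n r lam"
  shows "one_lam n \<phi> K Kinv lam = prod_list (map (\<lambda>j. P j (lam j)) [1..int n])"
proof -
  define js where "js = [1..int n]"
  define c where "c j m = sc (lam j) m" for j m
  define M where "M = {0..int r}"
  define ms0 where "ms0 = map lam js"
  have lam_nn: "lam j \<ge> 0" for j using cn by (simp add: comp_nr_def)
  have sum_r: "sum lam {1..int n} = int r" using cn by (simp add: comp_nr_def)
  have lam_le: "lam j \<le> int r" if "j \<in> {1..int n}" for j
    using member_le_sum[of j "{1..int n}" lam] that lam_nn sum_r by simp
  have sl0: "sum_list ms0 = int r"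
    unfolding ms0_def js_def using sum_r by (simp add: sum.distinct_set_conv_list[symmetric])
  have ms0_in: "ms0 \<in> chs M (length js)"
    unfolding chs_iff ms0_def M_def js_def using lam_le lam_nn by auto
  have "one_lam n \<phi> K Kinv lam = prod_list (map (\<lambda>j. \<Sum>m\<in>M. \<phi> (c j m) * P j m) js)"
    unfolding one_lam_def G_sum js_def M_def c_def ..
  also have "\<dots> = (\<Sum>ms\<in>chs M (length js). prod_list (map2 (\<lambda>j m. \<phi> (c j m) * P j m) js ms))"
    by (rule expand) (simp add: M_def)
  also have "\<dots> = (\<Sum>ms\<in>chs M (length js). \<phi> (prod_list (map2 c js ms)) * prod_list (map2 P js ms))"
    by (rule sum.cong) (auto simp: chs_iff scal_prod)
  also have "\<dots> = \<phi> (prod_list (map2 c js ms0)) * prod_list (map2 P js ms0)"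
  proof (subst sum_single[where a=ms0])
    show "finite (chs M (length js))" by (rule chs_finite) (simp add: M_def)
  next
    fix ms assume ms: "ms \<in> chs M (length js)" "ms \<noteq> ms0"
    then have len: "length ms = length js" and setM: "set ms \<subseteq> M" by (auto simp: chs_iff)
    show "\<phi> (prod_list (map2 c js ms)) * prod_list (map2 P js ms) = 0"
    proof (cases "\<exists>i < length js. ms ! i < ms0 ! i")
      case True
      then obtain i where i: "i < length js" "ms ! i < ms0 ! i" by blast
      have "ms ! i \<in> M" using setM i len nth_mem by (metis subsetD)
      then have "c (js ! i) (ms ! i) = 0"
        using i by (auto simp: c_def M_def ms0_def intro!: sc_zero)
      moreover have "c (js ! i) (ms ! i) \<in> set (map2 c js ms)"
      proof -
        have "map2 c js ms ! i = c (js ! i) (ms ! i)" using i len by simp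
        moreover have "i < length (map2 c js ms)" using i len by simp
        ultimately show ?thesis by (metis nth_mem)
      qed
      ultimately have "prod_list (map2 c js ms) = 0" by (simp add: prod_list_zero_iff)
      then show ?thesis by (simp add: phi_0[OF alg])
    next
      case False
      have "sum_list ms0 < sum_list ms"
        by (rule sum_list_strict) (use False len ms(2) in \<open>auto simp: ms0_def\<close>)
      then have ne: "sum_list ms \<noteq> int r" using sl0 by simp
      have "prod_list (map K js) * prod_list (map2 P js ms) = \<phi> (vq powi sum_list ms) * prod_list (map2 P js ms)"
        using len[symmetric] by (rule weight)
      moreover have "prod_list (map K js) = \<phi> (vq powi int r)"
        unfolding js_def Kprod by (simp add: power_int_of_nat)
      ultimately have "\<phi> (vq powi sum_list ms - vq powi int r) * prod_list (map2 P js ms) = 0"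
        by (simp add: phi_diff[OF alg] left_diff_distrib)
      moreover have "vq powi sum_list ms - vq powi int r \<noteq> 0" using ne vq_powi_inj by auto
      ultimately have "prod_list (map2 P js ms) = 0" using phi_cancel[OF alg] by blast
      then show ?thesis by simp
    qed
  qed (use ms0_in in simp)
  also have "\<dots> = prod_list (map (\<lambda>j. P j (lam j)) js)"
    unfolding ms0_def map2_diag c_def sc_one prod_list_ones phi_1[OF alg] by simp
  finally show ?thesis unfolding js_def .
qed

lemma E_shift: "E i * prod_list (map (\<lambda>j. P j (\<mu> j)) js) = prod_list (map (\<lambda>j. P j (\<mu> j + alpha n i j)) js) * E i"
proof (induct js)
  case Nil then show ?case by simp
next
  case (Cons a js)
  have KX: "K a * E i = \<phi> (vq powi (alpha n i a)) * E i * K a" using KE[of a i] by (simp add: eps_alpha)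
  have "E i * prod_list (map (\<lambda>j. P j (\<mu> j)) (a # js)) = (E i * P a (\<mu> a)) * prod_list (map (\<lambda>j. P j (\<mu> j)) js)"
    by (simp add: mult.assoc)
  also have "\<dots> = P a (\<mu> a + alpha n i a) * (E i * prod_list (map (\<lambda>j. P j (\<mu> j)) js))"
    by (simp only: P_shift[OF KX] mult.assoc)
  also have "\<dots> = prod_list (map (\<lambda>j. P j (\<mu> j + alpha n i j)) (a # js)) * E i"
    using Cons by (simp add: mult.assoc)
  finally show ?case .
qed

lemma F_shift: "F i * prod_list (map (\<lambda>j. P j (\<mu> j)) js) = prod_list (map (\<lambda>j. P j (\<mu> j - alpha n i j)) js) * F i"
proof (induct js)
  case Nil then show ?case by simp
next
  case (Cons a js)
  have KX: "K a * F i = \<phi> (vq powi (- alpha n i a)) * F i * K a" using KF[of a i] by (simp add: eps_alpha)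
  have "F i * prod_list (map (\<lambda>j. P j (\<mu> j)) (a # js)) = (F i * P a (\<mu> a)) * prod_list (map (\<lambda>j. P j (\<mu> j)) js)"
    by (simp add: mult.assoc)
  also have "\<dots> = P a (\<mu> a + - alpha n i a) * (F i * prod_list (map (\<lambda>j. P j (\<mu> j)) js))"
    by (simp only: P_shift[OF KX] mult.assoc)
  also have "\<dots> = prod_list (map (\<lambda>j. P j (\<mu> j - alpha n i j)) (a # js)) * F i"
    using Cons by (simp add: mult.assoc)
  finally show ?case .
qed

lemma main:
  assumes n2: "n \<ge> 2" and cn: "comp_nr n r lam" and i: "1 \<le> i" "i \<le> int n"
  shows "(E i * one_lam n \<phi> K Kinv lam =
            (if lam (i + 1) > 0 then one_lam n \<phi> K Kinv (\<lambda>j. lam j + alpha n i j) * E i else 0))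
       \<and> (F i * one_lam n \<phi> K Kinv lam =
            (if lam i > 0 then one_lam n \<phi> K Kinv (\<lambda>j. lam j - alpha n i j) * F i else 0))"
proof -
  have per: "\<And>j. lam (j + int n) = lam j" and nn: "\<And>j. lam j \<ge> 0" and sr: "sum lam {1..int n} = int r"
    using cn by (auto simp: comp_nr_def)
  have lmod: "lam x = lam (x mod int n)" for x by (rule periodic_mod) (rule per)
  have aper: "alpha n i (j + int n) = alpha n i j" for j by (simp add: alpha_def)
  have asum: "sum (alpha n i) {1..int n} = 0" by (rule alpha_sum[OF n2 i])
  define j1 where "j1 = (if i < int n then i + 1 else 1)"
  have j1r: "1 \<le> j1" "j1 \<le> int n" using i n2 by (auto simp: j1_def)
  have j1lam: "lam j1 = lam (i + 1)"
  proof (cases "i < int n")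
    case False then have "i = int n" using i by simp
    then show ?thesis using per[of 1] False by (simp add: j1_def add.commute)
  qed (simp add: j1_def)
  have aj1: "alpha n i j1 = -1" using alpha_cases[OF n2 i j1r] i n2 by (auto simp: j1_def)
  have aii: "alpha n i i = 1" by (simp add: alpha_def)
  have zero: "prod_list (map (\<lambda>j. P j (\<mu> j)) [1..int n]) = 0" if "j0 \<in> {1..int n}" "\<mu> j0 = -1" for \<mu> j0
    by (rule prod_list_zero) (use that in \<open>auto simp: P_out image_iff intro!: bexI[of _ j0]\<close>)
  have partE: "E i * one_lam n \<phi> K Kinv lam =
            (if lam (i + 1) > 0 then one_lam n \<phi> K Kinv (\<lambda>j. lam j + alpha n i j) * E i else 0)"
  proof (cases "lam (i + 1) > 0")
    case True
    have "comp_nr n r (\<lambda>j. lam j + alpha n i j)"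
      unfolding comp_nr_def
    proof (intro conjI allI)
      fix j show "lam (j + int n) + alpha n i (j + int n) = lam j + alpha n i j" by (simp add: per aper)
    next
      fix j show "0 \<le> lam j + alpha n i j"
      proof (cases "j mod int n = (i + 1) mod int n")
        case True
        then have "lam j = lam (i + 1)" using lmod by metis
        then show ?thesis using \<open>lam (i+1) > 0\<close> by (auto simp: alpha_def)
      next
        case False then show ?thesis using nn[of j] by (auto simp: alpha_def)
      qed
    next
      show "(\<Sum>j = 1..int n. lam j + alpha n i j) = int r" by (simp add: sum.distrib sr asum)
    qed
    then show ?thesis using True by (simp add: one_lam_e[OF cn] one_lam_e E_shift)
  next
    case False
    have "lam j1 + alpha n i j1 = -1" using False nn[of "i+1"] j1lam aj1 by simp
    then show ?thesis using False zero[of j1 "\<lambda>j. lam j + alpha n i j"] j1r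
      by (simp add: one_lam_e[OF cn] E_shift)
  qed
  have partF: "F i * one_lam n \<phi> K Kinv lam =
            (if lam i > 0 then one_lam n \<phi> K Kinv (\<lambda>j. lam j - alpha n i j) * F i else 0)"
  proof (cases "lam i > 0")
    case True
    have "comp_nr n r (\<lambda>j. lam j - alpha n i j)"
      unfolding comp_nr_def
    proof (intro conjI allI)
      fix j show "lam (j + int n) - alpha n i (j + int n) = lam j - alpha n i j" by (simp add: per aper)
    next
      fix j show "0 \<le> lam j - alpha n i j"
      proof (cases "j mod int n = i mod int n")
        case True
        then have "lam j = lam i" using lmod by metis
        then show ?thesis using \<open>lam i > 0\<close> by (auto simp: alpha_def)
      next
        case False then show ?thesis using nn[of j] by (auto simp: alpha_def)
      qed
    next
      show "(\<Sum>j = 1..int n. lam j - alpha n i j) = int r" by (simp add: sum_subtractf sr asum)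
    qed
    then show ?thesis using True by (simp add: one_lam_e[OF cn] one_lam_e F_shift)
  next
    case False
    have "lam i - alpha n i i = -1" using False nn[of i] aii by simp
    then show ?thesis using False zero[of i "\<lambda>j. lam j - alpha n i j"] i
      by (simp add: one_lam_e[OF cn] F_shift)
  qed
  show ?thesis using partE partF by blast
qed

end

theorem lemma2p2p6:
  fixes \<phi> :: "qv \<Rightarrow> 'a::ring_1" and E F K Kinv :: "int \<Rightarrow> 'a"
    and n r :: nat and lam :: "int \<Rightarrow> int" and i :: int
  assumes "r \<ge> 3" and "n > r"
    and "qv_algebra \<phi>"
    and "T_rels n r \<phi> E F K Kinv"
    and "comp_nr n r lam"
    and "1 \<le> i" and "i \<le> int n"
  shows "(E i * one_lam n \<phi> K Kinv lam =
            (if lam (i + 1) > 0 then one_lam n \<phi> K Kinv (\<lambda>j. lam j + alpha n i j) * E i else 0))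
       \<and> (F i * one_lam n \<phi> K Kinv lam =
            (if lam i > 0 then one_lam n \<phi> K Kinv (\<lambda>j. lam j - alpha n i j) * F i else 0))"
proof -
  have "n \<ge> 2" using assms(1,2) by simp
  then show ?thesis using main[OF assms(3) assms(4) _ assms(5) assms(6) assms(7)] by blast
qed

end
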